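(* $\mathcal{M}_{3,3}=\overline{\operatorname{RBM}_{3,2}}$, where the bar denotes topological closure in $\Delta_7$. Moreover, $\mathcal{M}_{3,3}$ and $\operatorname{RBM}_{3,2}$ contain exactly the same strictly positive distributions.
   Context: A distribution of three binary random variables is a $2\times2\times2$ tensor $p=(p_{ijk})_{i,j,k\in\{0,1\}}$ with nonnegative entries summing to $1$; the set of these is the simplex $\Delta_7$. For $a,b,c\in\mathbb{R}^2_{\ge0}$, $a\otimes b\otimes c$ is the tensor with entries $a_ib_jc_k$. $\mathcal{M}_{3,3}$ is the set of $p\in\Delta_7$ that are a sum of three tensors of the form $a\otimes b\otimes c$ with $a,b,c\in\mathbb{R}^2_{\ge0}$ (nonnegative rank at most $3$). $\operatorname{RBM}_{3,2}$ is the set of $p\in\Delta_7$ of the form $p=(a_1\otimes b_1\otimes c_1+d_1\otimes e_1\otimes f_1)*(a_2\otimes b_2\otimes c_2+d_2\otimes e_2\otimes f_2)$ with all vectors in $\mathbb{R}^2_{\ge0}$, where $*$ is the entrywise (Hadamard) product. *)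

theory Defs
  imports "HOL-Analysis.Analysis"
begin

text \<open>A 2x2x2 tensor is a function bool \<Rightarrow> bool \<Rightarrow> bool \<Rightarrow> real
  (index 0 ~ False, 1 ~ True); a vector in R^2 is bool \<Rightarrow> real.
  The topology is the product topology of HOL-Analysis (Function_Topology),
  which on this finite index set is the Euclidean topology of R^8.\<close>

type_synonym tensor3 = "bool \<Rightarrow> bool \<Rightarrow> bool \<Rightarrow> real"
type_synonym vec2 = "bool \<Rightarrow> real"

definition nonneg2 :: "vec2 \<Rightarrow> bool" where
  "nonneg2 a \<longleftrightarrow> (\<forall>i. a i \<ge> 0)"

definition outer3 :: "vec2 \<Rightarrow> vec2 \<Rightarrow> vec2 \<Rightarrow> tensor3" where
  "outer3 a b c = (\<lambda>i j k. a i * b j * c k)"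

definition simplex7 :: "tensor3 set" where
  "simplex7 = {p. (\<forall>i j k. p i j k \<ge> 0) \<and> (\<Sum>i\<in>UNIV. \<Sum>j\<in>UNIV. \<Sum>k\<in>UNIV. p i j k) = 1}"

definition M33 :: "tensor3 set" where
  "M33 = {p \<in> simplex7. \<exists>a b c :: nat \<Rightarrow> vec2.
            (\<forall>r<3. nonneg2 (a r) \<and> nonneg2 (b r) \<and> nonneg2 (c r)) \<and>
            p = (\<lambda>i j k. \<Sum>r<3. outer3 (a r) (b r) (c r) i j k)}"

definition RBM32 :: "tensor3 set" where
  "RBM32 = {p \<in> simplex7. \<exists>a1 b1 c1 d1 e1 f1 a2 b2 c2 d2 e2 f2.
            nonneg2 a1 \<and> nonneg2 b1 \<and> nonneg2 c1 \<and> nonneg2 d1 \<and> nonneg2 e1 \<and> nonneg2 f1 \<and>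
            nonneg2 a2 \<and> nonneg2 b2 \<and> nonneg2 c2 \<and> nonneg2 d2 \<and> nonneg2 e2 \<and> nonneg2 f2 \<and>
            p = (\<lambda>i j k. (outer3 a1 b1 c1 i j k + outer3 d1 e1 f1 i j k) *
                         (outer3 a2 b2 c2 i j k + outer3 d2 e2 f2 i j k))}"

definition strictly_positive :: "tensor3 \<Rightarrow> bool" where
  "strictly_positive p \<longleftrightarrow> (\<forall>i j k. p i j k > 0)"

end

theory Submission
  imports Defs
begin


definition cross :: "vec2 \<Rightarrow> vec2 \<Rightarrow> real" where
  "cross u v = u False * v True - u True * v False"

definition dA :: "tensor3 \<Rightarrow> bool \<Rightarrow> real" where
  "dA p i = p i False False * p i True True - p i False True * p i True False"
definition dB :: "tensor3 \<Rightarrow> bool \<Rightarrow> real" where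
  "dB p j = p False j False * p True j True - p False j True * p True j False"
definition dC :: "tensor3 \<Rightarrow> bool \<Rightarrow> real" where
  "dC p k = p False False k * p True True k - p False True k * p True False k"
definition samesign :: "(bool \<Rightarrow> real) \<Rightarrow> bool" where
  "samesign d \<longleftrightarrow> (0 \<le> d False \<and> 0 \<le> d True) \<or> (d False \<le> 0 \<and> d True \<le> 0)"
definition Cond :: "tensor3 \<Rightarrow> bool" where
  "Cond p \<longleftrightarrow> samesign (dA p) \<or> samesign (dB p) \<or> samesign (dC p)"

lemma dB_tr: "dB p = dA (\<lambda>j i k. p i j k)"
  by (rule ext) (simp add: dA_def dB_def)
lemma dC_tr: "dC p = dA (\<lambda>k i j. p i j k)"
  by (rule ext) (simp add: dA_def dC_def)

lemma had1:
  fixes a b c d a' b' c' d' :: real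
  assumes "0 \<le> a" "0 \<le> b" "0 \<le> c" "0 \<le> d" "0 \<le> a'" "0 \<le> b'" "0 \<le> c'" "0 \<le> d'"
    "b*c \<le> a*d" "b'*c' \<le> a'*d'"
  shows "(b*b')*(c*c') \<le> (a*a')*(d*d')"
proof -
  have "(b*c)*(b'*c') \<le> (a*d)*(a'*d')"
    by (rule mult_mono) (use assms in auto)
  then show ?thesis by (simp add: algebra_simps)
qed

lemma had2:
  fixes a b c d a' b' c' d' :: real
  assumes "0 \<le> a" "0 \<le> b" "0 \<le> c" "0 \<le> d" "0 \<le> a'" "0 \<le> b'" "0 \<le> c'" "0 \<le> d'"
    "a*d \<le> b*c" "a'*d' \<le> b'*c'"
  shows "(a*a')*(d*d') \<le> (b*b')*(c*c')"
proof -
  have "(a*d)*(a'*d') \<le> (b*c)*(b'*c')"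
    by (rule mult_mono) (use assms in auto)
  then show ?thesis by (simp add: algebra_simps)
qed

lemma hadA:
  fixes F G :: tensor3
  assumes nF: "\<And>i j k. 0 \<le> F i j k" and nG: "\<And>i j k. 0 \<le> G i j k"
    and eF: "\<And>i. dA F i = xF i * sF" and eG: "\<And>i. dA G i = xG i * sG"
    and xF: "\<And>i. 0 \<le> xF i" and xG: "\<And>i. 0 \<le> xG i"
    and s: "0 \<le> sF * sG"
  shows "samesign (dA (\<lambda>i j k. F i j k * G i j k))"
proof -
  have "(0 \<le> sF \<and> 0 \<le> sG) \<or> (sF \<le> 0 \<and> sG \<le> 0)"
    using s by (auto simp: zero_le_mult_iff)
  then show ?thesis
  proof
    assume h: "0 \<le> sF \<and> 0 \<le> sG"
    have "0 \<le> dA (\<lambda>i j k. F i j k * G i j k) i" for i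
    proof -
      have "0 \<le> dA F i" "0 \<le> dA G i" using eF eG xF xG h by auto
      then show ?thesis unfolding dA_def
        using had1[of "F i False False" "F i False True" "F i True False" "F i True True"
            "G i False False" "G i False True" "G i True False" "G i True True"] nF nG
        by (simp add: algebra_simps)
    qed
    then show ?thesis by (simp add: samesign_def)
  next
    assume h: "sF \<le> 0 \<and> sG \<le> 0"
    have "dA (\<lambda>i j k. F i j k * G i j k) i \<le> 0" for i
    proof -
      have "dA F i \<le> 0" "dA G i \<le> 0" using eF eG xF xG h
        by (auto simp: mult_nonneg_nonpos)
      then show ?thesis unfolding dA_def
        using had2[of "F i False False" "F i False True" "F i True False" "F i True True"
            "G i False False" "G i False True" "G i True False" "G i True True"] nF nG
        by (simp add: algebra_simps)
    qed
    then show ?thesis by (simp add: samesign_def)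
  qed
qed

lemma sign3:
  fixes A1 A2 A3 B1 B2 B3 :: real
  assumes "0 \<le> A1*A2*A3" "0 \<le> B1*B2*B3"
  shows "0 \<le> A1*B1 \<or> 0 \<le> A2*B2 \<or> 0 \<le> A3*B3"
proof (rule ccontr)
  assume "\<not> ?thesis"
  then have h: "A1*B1 < 0" "A2*B2 < 0" "A3*B3 < 0" by auto
  have "0 < (A1*B1)*(A2*B2)" using h by (simp add: mult_neg_neg)
  then have "(A1*B1)*(A2*B2)*(A3*B3) < 0" using h by (simp add: mult_pos_neg)
  moreover have "0 \<le> (A1*A2*A3)*(B1*B2*B3)" using assms by simp
  ultimately show False by (simp add: algebra_simps)
qed

lemma nonneg_outer: "nonneg2 a \<Longrightarrow> nonneg2 b \<Longrightarrow> nonneg2 c \<Longrightarrow> 0 \<le> outer3 a b c i j k"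
  by (simp add: nonneg2_def outer3_def)

lemma RBM_ex:
  assumes "p \<in> RBM32" shows "\<exists>a1 b1 c1 d1 e1 f1 a2 b2 c2 d2 e2 f2.
            nonneg2 a1 \<and> nonneg2 b1 \<and> nonneg2 c1 \<and> nonneg2 d1 \<and> nonneg2 e1 \<and> nonneg2 f1 \<and>
            nonneg2 a2 \<and> nonneg2 b2 \<and> nonneg2 c2 \<and> nonneg2 d2 \<and> nonneg2 e2 \<and> nonneg2 f2 \<and>
            p = (\<lambda>i j k. (outer3 a1 b1 c1 i j k + outer3 d1 e1 f1 i j k) *
                         (outer3 a2 b2 c2 i j k + outer3 d2 e2 f2 i j k))"
  using assms unfolding RBM32_def by simp
lemma RBM_Cond:
  assumes "p \<in> RBM32" shows "Cond p"
proof -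
  obtain a1 b1 c1 d1 e1 f1 a2 b2 c2 d2 e2 f2 where
    n: "nonneg2 a1" "nonneg2 b1" "nonneg2 c1" "nonneg2 d1" "nonneg2 e1" "nonneg2 f1"
       "nonneg2 a2" "nonneg2 b2" "nonneg2 c2" "nonneg2 d2" "nonneg2 e2" "nonneg2 f2" and
    p: "p = (\<lambda>i j k. (outer3 a1 b1 c1 i j k + outer3 d1 e1 f1 i j k) *
                         (outer3 a2 b2 c2 i j k + outer3 d2 e2 f2 i j k))"
    using RBM_ex[OF assms] by (elim exE conjE) (rule that; assumption)
  define F where "F = (\<lambda>i j k. outer3 a1 b1 c1 i j k + outer3 d1 e1 f1 i j k)"
  define G where "G = (\<lambda>i j k. outer3 a2 b2 c2 i j k + outer3 d2 e2 f2 i j k)"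
  have p': "p = (\<lambda>i j k. F i j k * G i j k)" using p by (simp add: F_def G_def)
  have nF: "\<And>i j k. 0 \<le> F i j k" and nG: "\<And>i j k. 0 \<le> G i j k"
    using n by (auto simp: F_def G_def intro!: add_nonneg_nonneg nonneg_outer)
  have nA: "\<And>v i. nonneg2 v \<Longrightarrow> 0 \<le> v i" by (simp add: nonneg2_def)
  define A1 where "A1 = cross b1 e1 * cross c1 f1"
  define A2 where "A2 = cross a1 d1 * cross c1 f1"
  define A3 where "A3 = cross a1 d1 * cross b1 e1"
  define B1 where "B1 = cross b2 e2 * cross c2 f2"
  define B2 where "B2 = cross a2 d2 * cross c2 f2"
  define B3 where "B3 = cross a2 d2 * cross b2 e2"
  have "0 \<le> A1*A2*A3"
  proof -
    have "A1*A2*A3 = (cross a1 d1 * cross b1 e1 * cross c1 f1)^2"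
      unfolding A1_def A2_def A3_def by algebra
    then show ?thesis by simp
  qed
  moreover have "0 \<le> B1*B2*B3"
  proof -
    have "B1*B2*B3 = (cross a2 d2 * cross b2 e2 * cross c2 f2)^2"
      unfolding B1_def B2_def B3_def by algebra
    then show ?thesis by simp
  qed
  ultimately have s: "0 \<le> A1*B1 \<or> 0 \<le> A2*B2 \<or> 0 \<le> A3*B3" by (rule sign3)
  have eFA: "dA F i = (a1 i * d1 i) * A1" for i
    unfolding F_def dA_def A1_def outer3_def cross_def by algebra
  have eGA: "dA G i = (a2 i * d2 i) * B1" for i
    unfolding G_def dA_def B1_def outer3_def cross_def by algebra
  have eFB: "dA (\<lambda>j i k. F i j k) i = (b1 i * e1 i) * A2" for i
    unfolding F_def dA_def A2_def outer3_def cross_def by algebra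
  have eGB: "dA (\<lambda>j i k. G i j k) i = (b2 i * e2 i) * B2" for i
    unfolding G_def dA_def B2_def outer3_def cross_def by algebra
  have eFC: "dA (\<lambda>k i j. F i j k) i = (c1 i * f1 i) * A3" for i
    unfolding F_def dA_def A3_def outer3_def cross_def by algebra
  have eGC: "dA (\<lambda>k i j. G i j k) i = (c2 i * f2 i) * B3" for i
    unfolding G_def dA_def B3_def outer3_def cross_def by algebra
  from s show ?thesis
  proof (elim disjE)
    assume "0 \<le> A1*B1"
    then have "samesign (dA (\<lambda>i j k. F i j k * G i j k))"
      using n nA by (intro hadA[OF nF nG eFA eGA]) (auto intro: mult_nonneg_nonneg)
    then show ?thesis by (simp add: Cond_def p')
  next
    assume "0 \<le> A2*B2"
    then have "samesign (dA (\<lambda>j i k. F i j k * G i j k))"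
      using n nA by (intro hadA[of "\<lambda>j i k. F i j k" "\<lambda>j i k. G i j k", OF nF nG eFB eGB]) (auto intro: mult_nonneg_nonneg)
    then show ?thesis by (simp add: Cond_def p' dB_tr)
  next
    assume "0 \<le> A3*B3"
    then have "samesign (dA (\<lambda>k i j. F i j k * G i j k))"
      using n nA by (intro hadA[of "\<lambda>k i j. F i j k" "\<lambda>k i j. G i j k", OF nF nG eFC eGC]) (auto intro: mult_nonneg_nonneg)
    then show ?thesis by (simp add: Cond_def p' dC_tr)
  qed
qed



definition decA :: "tensor3 \<Rightarrow> bool" where
  "decA p \<longleftrightarrow> (\<exists>(U::bool\<Rightarrow>vec2) (V::bool\<Rightarrow>vec2) (L::vec2) j0 k0.
     (\<forall>i j. 0 \<le> U i j \<and> 0 \<le> V i j \<and> 0 \<le> L i) \<and>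
     (\<forall>i j k. p i j k = U i j * V i k + (if j = j0 \<and> k = k0 then L i else 0)))"
definition decB :: "tensor3 \<Rightarrow> bool" where
  "decB p \<longleftrightarrow> (\<exists>(U::bool\<Rightarrow>vec2) (V::bool\<Rightarrow>vec2) (L::vec2) j0 k0.
     (\<forall>i j. 0 \<le> U i j \<and> 0 \<le> V i j \<and> 0 \<le> L i) \<and>
     (\<forall>i j k. p i j k = U j i * V j k + (if i = j0 \<and> k = k0 then L j else 0)))"
definition decC :: "tensor3 \<Rightarrow> bool" where
  "decC p \<longleftrightarrow> (\<exists>(U::bool\<Rightarrow>vec2) (V::bool\<Rightarrow>vec2) (L::vec2) j0 k0.
     (\<forall>i j. 0 \<le> U i j \<and> 0 \<le> V i j \<and> 0 \<le> L i) \<and>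
     (\<forall>i j k. p i j k = U k i * V k j + (if i = j0 \<and> j = k0 then L k else 0)))"

lemma mat_dec:
  fixes M :: "bool \<Rightarrow> bool \<Rightarrow> real"
  assumes n: "\<And>j k. 0 \<le> M j k" and d: "M False True * M True False \<le> M False False * M True True"
  shows "\<exists>u v l. (\<forall>j. 0 \<le> u j \<and> 0 \<le> v j) \<and> 0 \<le> l \<and>
           (\<forall>j k. M j k = u j * v k + (if j = True \<and> k = True then l else 0))"
proof -
  define a where "a = M False False"
  define b where "b = M False True"
  define c where "c = M True False"
  define e where "e = M True True"
  have ab: "0 \<le> a" "0 \<le> b" "0 \<le> c" "0 \<le> e" using n by (auto simp: a_def b_def c_def e_def)
  have d': "b * c \<le> a * e" using d by (simp add: a_def b_def c_def e_def)
  have M: "\<And>j k. M j k = (if j then (if k then e else c) else (if k then b else a))"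
    by (auto simp: a_def b_def c_def e_def)
  show ?thesis
  proof (cases "a > 0")
    case True
    have "b * c / a \<le> e" using d' True by (simp add: divide_le_eq mult.commute)
    moreover have "0 \<le> b * c / a" using ab by simp
    ultimately show ?thesis using True ab
      by (intro exI[of _ "\<lambda>j. if j then c / a else 1"] exI[of _ "\<lambda>k. if k then b else a"]
          exI[of _ "e - b * c / a"]) (auto simp: M all_bool_eq)
  next
    case False
    then have a0: "a = 0" using ab by simp
    then have "b * c \<le> 0" using d' by simp
    moreover have "0 \<le> b * c" using ab by simp
    ultimately have "b * c = 0" by linarith
    then have "b = 0 \<or> c = 0" by simp
    then show ?thesis
    proof
      assume "b = 0"
      then show ?thesis using ab a0
        by (intro exI[of _ "\<lambda>j. if j then 1 else 0"] exI[of _ "\<lambda>k. if k then e else c"]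
            exI[of _ 0]) (auto simp: M all_bool_eq)
    next
      assume "c = 0"
      then show ?thesis using ab a0
        by (intro exI[of _ "\<lambda>j. if j then e else b"] exI[of _ "\<lambda>k. if k then 1 else 0"]
            exI[of _ 0]) (auto simp: M all_bool_eq)
    qed
  qed
qed

lemma mat_dec_sub:
  fixes M :: "bool \<Rightarrow> bool \<Rightarrow> real"
  assumes n: "\<And>j k. 0 \<le> M j k" and d: "M False False * M True True \<le> M False True * M True False"
  shows "\<exists>u v l. (\<forall>j. 0 \<le> u j \<and> 0 \<le> v j) \<and> 0 \<le> l \<and>
           (\<forall>j k. M j k = u j * v k + (if j = False \<and> k = True then l else 0))"
proof -
  obtain u v l where h: "\<forall>j. 0 \<le> u j \<and> 0 \<le> v j" "0 \<le> l"
    "\<forall>j k. M (\<not> j) k = u j * v k + (if j = True \<and> k = True then l else 0)"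
    using mat_dec[of "\<lambda>j k. M (\<not> j) k"] n d by (auto simp: mult.commute)
  have "\<forall>j k. M j k = u (\<not> j) * v k + (if j = False \<and> k = True then l else 0)"
  proof (intro allI)
    fix j k
    show "M j k = u (\<not> j) * v k + (if j = False \<and> k = True then l else 0)"
      using h(3)[rule_format, of "\<not> j" k] by simp
  qed
  then show ?thesis using h by (intro exI[of _ "\<lambda>j. u (\<not> j)"] exI[of _ v] exI[of _ l]) auto
qed

lemma mat_dec2:
  fixes M :: "bool \<Rightarrow> bool \<Rightarrow> real"
  assumes n: "\<And>j k. 0 \<le> M j k"
  shows "0 \<le> M False False * M True True - M False True * M True False \<Longrightarrow>
     \<exists>u v l. (\<forall>j. 0 \<le> u j \<and> 0 \<le> v j) \<and> 0 \<le> l \<and>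
           (\<forall>j k. M j k = u j * v k + (if j = True \<and> k = True then l else 0))"
    and "M False False * M True True - M False True * M True False \<le> 0 \<Longrightarrow>
     \<exists>u v l. (\<forall>j. 0 \<le> u j \<and> 0 \<le> v j) \<and> 0 \<le> l \<and>
           (\<forall>j k. M j k = u j * v k + (if j = False \<and> k = True then l else 0))"
  using mat_dec[OF n] mat_dec_sub[OF n] by auto

lemma slices_dec:
  fixes P :: "bool \<Rightarrow> bool \<Rightarrow> bool \<Rightarrow> real"
  assumes n: "\<And>i j k. 0 \<le> P i j k"
    and s: "samesign (\<lambda>i. P i False False * P i True True - P i False True * P i True False)"
  shows "\<exists>(U::bool\<Rightarrow>vec2) (V::bool\<Rightarrow>vec2) (L::vec2) j0 k0.
     (\<forall>i j. 0 \<le> U i j \<and> 0 \<le> V i j \<and> 0 \<le> L i) \<and>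
     (\<forall>i j k. P i j k = U i j * V i k + (if j = j0 \<and> k = k0 then L i else 0))"
proof -
  from s consider "\<forall>i. 0 \<le> P i False False * P i True True - P i False True * P i True False"
    | "\<forall>i. P i False False * P i True True - P i False True * P i True False \<le> 0"
    unfolding samesign_def by (metis (full_types))
  then show ?thesis
  proof cases
    case 1
    then have "\<forall>i. \<exists>u v l. (\<forall>j. 0 \<le> u j \<and> 0 \<le> v j) \<and> 0 \<le> l \<and>
           (\<forall>j k. P i j k = u j * v k + (if j = True \<and> k = True then l else 0))"
      using mat_dec2(1)[of "P _"] n by blast
    then obtain U V L where "\<forall>i. (\<forall>j. 0 \<le> U i j \<and> 0 \<le> V i j) \<and> 0 \<le> L i \<and>
           (\<forall>j k. P i j k = U i j * V i k + (if j = True \<and> k = True then L i else 0))"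
      by metis
    then show ?thesis by blast
  next
    case 2
    then have "\<forall>i. \<exists>u v l. (\<forall>j. 0 \<le> u j \<and> 0 \<le> v j) \<and> 0 \<le> l \<and>
           (\<forall>j k. P i j k = u j * v k + (if j = False \<and> k = True then l else 0))"
      using mat_dec2(2)[of "P _"] n by blast
    then obtain U V L where "\<forall>i. (\<forall>j. 0 \<le> U i j \<and> 0 \<le> V i j) \<and> 0 \<le> L i \<and>
           (\<forall>j k. P i j k = U i j * V i k + (if j = False \<and> k = True then L i else 0))"
      by metis
    then show ?thesis by blast
  qed
qed

lemma Cond_dec:
  assumes n: "\<And>i j k. 0 \<le> p i j k" and c: "Cond p"
  shows "decA p \<or> decB p \<or> decC p"
proof -
  from c consider "samesign (dA p)" | "samesign (dB p)" | "samesign (dC p)"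
    unfolding Cond_def by blast
  then show ?thesis
  proof cases
    case 1
    then have "decA p" unfolding decA_def
      by (intro slices_dec) (use n in \<open>auto simp: dA_def[abs_def]\<close>)
    then show ?thesis by simp
  next
    case 2
    have "\<exists>(U::bool\<Rightarrow>vec2) (V::bool\<Rightarrow>vec2) (L::vec2) j0 k0.
     (\<forall>i j. 0 \<le> U i j \<and> 0 \<le> V i j \<and> 0 \<le> L i) \<and>
     (\<forall>i j k. (\<lambda>j i k. p i j k) i j k = U i j * V i k + (if j = j0 \<and> k = k0 then L i else 0))"
      by (intro slices_dec) (use n 2 in \<open>auto simp: dB_def[abs_def]\<close>)
    then obtain U V L j0 k0 where h1: "\<forall>i j. 0 \<le> U i j \<and> 0 \<le> V i j \<and> 0 \<le> (L::vec2) i"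
      and h2: "\<forall>i j k. (\<lambda>j i k. p i j k) i j k = (U::bool\<Rightarrow>vec2) i j * (V::bool\<Rightarrow>vec2) i k + (if j = j0 \<and> k = k0 then L i else 0)"
      by blast
    have "\<forall>i j k. p i j k = U j i * V j k + (if i = j0 \<and> k = k0 then L j else 0)"
    proof (intro allI)
      fix i j k show "p i j k = U j i * V j k + (if i = j0 \<and> k = k0 then L j else 0)" using h2[rule_format, of i j k] by simp
    qed
    then have "decB p" unfolding decB_def using h1 by blast
    then show ?thesis by simp
  next
    case 3
    have "\<exists>(U::bool\<Rightarrow>vec2) (V::bool\<Rightarrow>vec2) (L::vec2) j0 k0.
     (\<forall>i j. 0 \<le> U i j \<and> 0 \<le> V i j \<and> 0 \<le> L i) \<and>
     (\<forall>i j k. (\<lambda>k i j. p i j k) i j k = U i j * V i k + (if j = j0 \<and> k = k0 then L i else 0))"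
      by (intro slices_dec) (use n 3 in \<open>auto simp: dC_def[abs_def]\<close>)
    then obtain U V L j0 k0 where h1: "\<forall>i j. 0 \<le> U i j \<and> 0 \<le> V i j \<and> 0 \<le> (L::vec2) i"
      and h2: "\<forall>i j k. (\<lambda>k i j. p i j k) i j k = (U::bool\<Rightarrow>vec2) i j * (V::bool\<Rightarrow>vec2) i k + (if j = j0 \<and> k = k0 then L i else 0)"
      by blast
    have "\<forall>i j k. p i j k = U k i * V k j + (if i = j0 \<and> j = k0 then L k else 0)"
    proof (intro allI)
      fix i j k show "p i j k = U k i * V k j + (if i = j0 \<and> j = k0 then L k else 0)" using h2[rule_format, of i j k] by simp
    qed
    then have "decC p" unfolding decC_def using h1 by blast
    then show ?thesis by simp
  qed
qed



lemma sum3: "(\<Sum>r<(3::nat). f r) = f 0 + f 1 + (f 2 :: real)"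
  by (simp add: numeral_3_eq_3 eval_nat_numeral)

definition eF :: vec2 where "eF = (\<lambda>i. if i then 0 else 1)"
definition eT :: vec2 where "eT = (\<lambda>i. if i then 1 else 0)"
definition dl :: "bool \<Rightarrow> vec2" where "dl j0 = (\<lambda>j. if j = j0 then 1 else 0)"

lemma sel: "eF i * x False + eT i * x True = x i"
  by (cases i) (auto simp: eF_def eT_def)

lemma decA_M33: assumes "decA p" "p \<in> simplex7" shows "p \<in> M33"
proof -
  obtain U V L j0 k0 where n: "\<forall>i j. 0 \<le> U i j \<and> 0 \<le> V i j \<and> 0 \<le> (L::vec2) i"
    and e: "\<forall>i j k. p i j k = (U::bool\<Rightarrow>vec2) i j * (V::bool\<Rightarrow>vec2) i k + (if j = j0 \<and> k = k0 then L i else 0)"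
    using assms(1) unfolding decA_def by blast
  define a where "a = (\<lambda>r::nat. if r = 0 then eF else if r = 1 then eT else L)"
  define b where "b = (\<lambda>r::nat. if r = 0 then U False else if r = 1 then U True else dl j0)"
  define c where "c = (\<lambda>r::nat. if r = 0 then V False else if r = 1 then V True else dl k0)"
  have "p = (\<lambda>i j k. \<Sum>r<3. outer3 (a r) (b r) (c r) i j k)"
  proof (intro ext)
    fix i j k
    show "p i j k = (\<Sum>r<3. outer3 (a r) (b r) (c r) i j k)"
      using e sel[of i "\<lambda>i. U i j * V i k"]
      by (simp add: sum3 a_def b_def c_def outer3_def dl_def algebra_simps)
  qed
  moreover have "\<forall>r<3. nonneg2 (a r) \<and> nonneg2 (b r) \<and> nonneg2 (c r)"
    using n by (auto simp: a_def b_def c_def nonneg2_def eF_def eT_def dl_def)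
  ultimately show ?thesis using assms(2) unfolding M33_def by blast
qed

lemma decB_M33: assumes "decB p" "p \<in> simplex7" shows "p \<in> M33"
proof -
  obtain U V L j0 k0 where n: "\<forall>i j. 0 \<le> U i j \<and> 0 \<le> V i j \<and> 0 \<le> (L::vec2) i"
    and e: "\<forall>i j k. p i j k = (U::bool\<Rightarrow>vec2) j i * (V::bool\<Rightarrow>vec2) j k + (if i = j0 \<and> k = k0 then L j else 0)"
    using assms(1) unfolding decB_def by blast
  define a where "a = (\<lambda>r::nat. if r = 0 then U False else if r = 1 then U True else dl j0)"
  define b where "b = (\<lambda>r::nat. if r = 0 then eF else if r = 1 then eT else L)"
  define c where "c = (\<lambda>r::nat. if r = 0 then V False else if r = 1 then V True else dl k0)"
  have "p = (\<lambda>i j k. \<Sum>r<3. outer3 (a r) (b r) (c r) i j k)"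
  proof (intro ext)
    fix i j k
    show "p i j k = (\<Sum>r<3. outer3 (a r) (b r) (c r) i j k)"
      using e sel[of j "\<lambda>j. U j i * V j k"]
      by (simp add: sum3 a_def b_def c_def outer3_def dl_def algebra_simps)
  qed
  moreover have "\<forall>r<3. nonneg2 (a r) \<and> nonneg2 (b r) \<and> nonneg2 (c r)"
    using n by (auto simp: a_def b_def c_def nonneg2_def eF_def eT_def dl_def)
  ultimately show ?thesis using assms(2) unfolding M33_def by blast
qed

lemma decC_M33: assumes "decC p" "p \<in> simplex7" shows "p \<in> M33"
proof -
  obtain U V L j0 k0 where n: "\<forall>i j. 0 \<le> U i j \<and> 0 \<le> V i j \<and> 0 \<le> (L::vec2) i"
    and e: "\<forall>i j k. p i j k = (U::bool\<Rightarrow>vec2) k i * (V::bool\<Rightarrow>vec2) k j + (if i = j0 \<and> j = k0 then L k else 0)"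
    using assms(1) unfolding decC_def by blast
  define a where "a = (\<lambda>r::nat. if r = 0 then U False else if r = 1 then U True else dl j0)"
  define b where "b = (\<lambda>r::nat. if r = 0 then V False else if r = 1 then V True else dl k0)"
  define c where "c = (\<lambda>r::nat. if r = 0 then eF else if r = 1 then eT else L)"
  have "p = (\<lambda>i j k. \<Sum>r<3. outer3 (a r) (b r) (c r) i j k)"
  proof (intro ext)
    fix i j k
    show "p i j k = (\<Sum>r<3. outer3 (a r) (b r) (c r) i j k)"
      using e sel[of k "\<lambda>k. U k i * V k j"]
      by (simp add: sum3 a_def b_def c_def outer3_def dl_def algebra_simps)
  qed
  moreover have "\<forall>r<3. nonneg2 (a r) \<and> nonneg2 (b r) \<and> nonneg2 (c r)"
    using n by (auto simp: a_def b_def c_def nonneg2_def eF_def eT_def dl_def)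
  ultimately show ?thesis using assms(2) unfolding M33_def by blast
qed

lemma RBM_I:
  assumes "p \<in> simplex7" "nonneg2 a1" "nonneg2 b1" "nonneg2 c1" "nonneg2 d1" "nonneg2 e1" "nonneg2 f1"
    "nonneg2 a2" "nonneg2 b2" "nonneg2 c2" "nonneg2 d2" "nonneg2 e2" "nonneg2 f2"
    "\<And>i j k. p i j k = (outer3 a1 b1 c1 i j k + outer3 d1 e1 f1 i j k) *
                         (outer3 a2 b2 c2 i j k + outer3 d2 e2 f2 i j k)"
  shows "p \<in> RBM32"
proof -
  have eq: "p = (\<lambda>i j k. (outer3 a1 b1 c1 i j k + outer3 d1 e1 f1 i j k) *
                         (outer3 a2 b2 c2 i j k + outer3 d2 e2 f2 i j k))"
    using assms(14) by (intro ext)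
  show ?thesis unfolding RBM32_def mem_Collect_eq
    apply (rule conjI[OF assms(1)])
    apply (rule exI[of _ a1], rule exI[of _ b1], rule exI[of _ c1], rule exI[of _ d1],
        rule exI[of _ e1], rule exI[of _ f1], rule exI[of _ a2], rule exI[of _ b2],
        rule exI[of _ c2], rule exI[of _ d2], rule exI[of _ e2], rule exI[of _ f2])
    using assms(2-13) eq by (simp only: simp_thms)
qed

lemma nn_basic: "nonneg2 eF" "nonneg2 eT" "nonneg2 (dl j0)" "nonneg2 (\<lambda>_. 1)"
  by (auto simp: nonneg2_def eF_def eT_def dl_def)

lemma decA_RBM: assumes "decA p" "p \<in> simplex7" "strictly_positive p" shows "p \<in> RBM32"
proof -
  obtain U V L j0 k0 where n: "\<forall>i j. 0 \<le> U i j \<and> 0 \<le> V i j \<and> 0 \<le> (L::vec2) i"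
    and e: "\<forall>i j k. p i j k = (U::bool\<Rightarrow>vec2) i j * (V::bool\<Rightarrow>vec2) i k + (if j = j0 \<and> k = k0 then L i else 0)"
    using assms(1) unfolding decA_def by blast
  have pos: "0 < p i j k" for i j k using assms(3) by (simp add: strictly_positive_def)
  have nz: "U i j0 * V i k0 \<noteq> 0" for i
  proof -
    have "0 < U i j0 * V i (\<not> k0)" using pos[of i j0 "\<not> k0"] e by simp
    moreover have "0 < U i (\<not> j0) * V i k0" using pos[of i "\<not> j0" k0] e by simp
    ultimately show ?thesis by auto
  qed
  define mu where "mu = (\<lambda>i. L i / (U i j0 * V i k0))"
  have "0 \<le> mu i" for i using n unfolding mu_def by (auto intro!: divide_nonneg_nonneg)
  then have nmu: "nonneg2 mu" by (simp add: nonneg2_def)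
  have nUV: "nonneg2 (U b)" "nonneg2 (V b)" for b using n by (auto simp: nonneg2_def)
  show ?thesis
  proof (rule RBM_I[OF assms(2), of eF "U False" "V False" eT "U True" "V True"
        "\<lambda>_. 1" "\<lambda>_. 1" "\<lambda>_. 1" mu "dl j0" "dl k0"])
    fix i j k
    have f1: "outer3 eF (U False) (V False) i j k + outer3 eT (U True) (V True) i j k = U i j * V i k"
      using sel[of i "\<lambda>i. U i j * V i k"] by (simp add: outer3_def algebra_simps)
    have f2: "outer3 (\<lambda>_. 1) (\<lambda>_. 1) (\<lambda>_. 1) i j k + outer3 mu (dl j0) (dl k0) i j k
       = 1 + (if j = j0 \<and> k = k0 then mu i else 0)" by (simp add: outer3_def dl_def)
    have "p i j k = (U i j * V i k) * (1 + (if j = j0 \<and> k = k0 then mu i else 0))"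
    proof (cases "j = j0 \<and> k = k0")
      case True
      then have "p i j k = U i j0 * V i k0 + L i" using e by simp
      moreover have "U i j0 * V i k0 * (L i / (U i j0 * V i k0)) = L i" using nz[of i] by simp
      ultimately show ?thesis using True by (simp add: mu_def distrib_left)
    next
      case False
      have h: "p i j k = U i j * V i k + (if j = j0 \<and> k = k0 then L i else 0)" using e by blast
      show ?thesis by (simp only: h if_not_P[OF False]) simp
    qed
    then show "p i j k = (outer3 eF (U False) (V False) i j k + outer3 eT (U True) (V True) i j k) *
        (outer3 (\<lambda>_. 1) (\<lambda>_. 1) (\<lambda>_. 1) i j k + outer3 mu (dl j0) (dl k0) i j k)"
      by (simp only: f1 f2)
  qed (use nmu nn_basic nUV in simp_all)
qed

lemma decB_RBM: assumes "decB p" "p \<in> simplex7" "strictly_positive p" shows "p \<in> RBM32"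
proof -
  obtain U V L j0 k0 where n: "\<forall>i j. 0 \<le> U i j \<and> 0 \<le> V i j \<and> 0 \<le> (L::vec2) i"
    and e: "\<forall>i j k. p i j k = (U::bool\<Rightarrow>vec2) j i * (V::bool\<Rightarrow>vec2) j k + (if i = j0 \<and> k = k0 then L j else 0)"
    using assms(1) unfolding decB_def by blast
  have pos: "0 < p i j k" for i j k using assms(3) by (simp add: strictly_positive_def)
  have nz: "U j j0 * V j k0 \<noteq> 0" for j
  proof -
    have "0 < U j j0 * V j (\<not> k0)" using pos[of j0 j "\<not> k0"] e by simp
    moreover have "0 < U j (\<not> j0) * V j k0" using pos[of "\<not> j0" j k0] e by simp
    ultimately show ?thesis by auto
  qed
  define mu where "mu = (\<lambda>j. L j / (U j j0 * V j k0))"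
  have "0 \<le> mu i" for i using n unfolding mu_def by (auto intro!: divide_nonneg_nonneg)
  then have nmu: "nonneg2 mu" by (simp add: nonneg2_def)
  have nUV: "nonneg2 (U b)" "nonneg2 (V b)" for b using n by (auto simp: nonneg2_def)
  show ?thesis
  proof (rule RBM_I[OF assms(2), of "U False" eF "V False" "U True" eT "V True" "\<lambda>_. 1" "\<lambda>_. 1" "\<lambda>_. 1" "dl j0" mu "dl k0"])
    fix i j k
    have f1: "outer3 (U False) eF (V False) i j k + outer3 (U True) eT (V True) i j k = U j i * V j k"
      using sel[of j "\<lambda>j. U j i * V j k"] by (simp add: outer3_def algebra_simps)
    have f2: "outer3 (\<lambda>_. 1) (\<lambda>_. 1) (\<lambda>_. 1) i j k + outer3 (dl j0) mu (dl k0) i j k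
       = 1 + (if i = j0 \<and> k = k0 then mu j else 0)" by (simp add: outer3_def dl_def)
    have "p i j k = (U j i * V j k) * (1 + (if i = j0 \<and> k = k0 then mu j else 0))"
    proof (cases "i = j0 \<and> k = k0")
      case True
      then have "p i j k = U j j0 * V j k0 + L j" using e by simp
      moreover have "U j j0 * V j k0 * (L j / (U j j0 * V j k0)) = L j" using nz[of j] by simp
      ultimately show ?thesis using True by (simp add: mu_def distrib_left)
    next
      case False
      have h: "p i j k = U j i * V j k + (if i = j0 \<and> k = k0 then L j else 0)" using e by blast
      show ?thesis by (simp only: h if_not_P[OF False]) simp
    qed
    then show "p i j k = (outer3 (U False) eF (V False) i j k + outer3 (U True) eT (V True) i j k) *
        (outer3 (\<lambda>_. 1) (\<lambda>_. 1) (\<lambda>_. 1) i j k + outer3 (dl j0) mu (dl k0) i j k)"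
      by (simp only: f1 f2)
  qed (use nmu nn_basic nUV in simp_all)
qed

lemma decC_RBM: assumes "decC p" "p \<in> simplex7" "strictly_positive p" shows "p \<in> RBM32"
proof -
  obtain U V L j0 k0 where n: "\<forall>i j. 0 \<le> U i j \<and> 0 \<le> V i j \<and> 0 \<le> (L::vec2) i"
    and e: "\<forall>i j k. p i j k = (U::bool\<Rightarrow>vec2) k i * (V::bool\<Rightarrow>vec2) k j + (if i = j0 \<and> j = k0 then L k else 0)"
    using assms(1) unfolding decC_def by blast
  have pos: "0 < p i j k" for i j k using assms(3) by (simp add: strictly_positive_def)
  have nz: "U k j0 * V k k0 \<noteq> 0" for k
  proof -
    have "0 < U k j0 * V k (\<not> k0)" using pos[of j0 "\<not> k0" k] e by simp
    moreover have "0 < U k (\<not> j0) * V k k0" using pos[of "\<not> j0" k0 k] e by simp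
    ultimately show ?thesis by auto
  qed
  define mu where "mu = (\<lambda>k. L k / (U k j0 * V k k0))"
  have "0 \<le> mu i" for i using n unfolding mu_def by (auto intro!: divide_nonneg_nonneg)
  then have nmu: "nonneg2 mu" by (simp add: nonneg2_def)
  have nUV: "nonneg2 (U b)" "nonneg2 (V b)" for b using n by (auto simp: nonneg2_def)
  show ?thesis
  proof (rule RBM_I[OF assms(2), of "U False" "V False" eF "U True" "V True" eT "\<lambda>_. 1" "\<lambda>_. 1" "\<lambda>_. 1" "dl j0" "dl k0" mu])
    fix i j k
    have f1: "outer3 (U False) (V False) eF i j k + outer3 (U True) (V True) eT i j k = U k i * V k j"
      using sel[of k "\<lambda>k. U k i * V k j"] by (simp add: outer3_def algebra_simps)
    have f2: "outer3 (\<lambda>_. 1) (\<lambda>_. 1) (\<lambda>_. 1) i j k + outer3 (dl j0) (dl k0) mu i j k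
       = 1 + (if i = j0 \<and> j = k0 then mu k else 0)" by (simp add: outer3_def dl_def)
    have "p i j k = (U k i * V k j) * (1 + (if i = j0 \<and> j = k0 then mu k else 0))"
    proof (cases "i = j0 \<and> j = k0")
      case True
      then have "p i j k = U k j0 * V k k0 + L k" using e by simp
      moreover have "U k j0 * V k k0 * (L k / (U k j0 * V k k0)) = L k" using nz[of k] by simp
      ultimately show ?thesis using True by (simp add: mu_def distrib_left)
    next
      case False
      have h: "p i j k = U k i * V k j + (if i = j0 \<and> j = k0 then L k else 0)" using e by blast
      show ?thesis by (simp only: h if_not_P[OF False]) simp
    qed
    then show "p i j k = (outer3 (U False) (V False) eF i j k + outer3 (U True) (V True) eT i j k) *
        (outer3 (\<lambda>_. 1) (\<lambda>_. 1) (\<lambda>_. 1) i j k + outer3 (dl j0) (dl k0) mu i j k)"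
      by (simp only: f1 f2)
  qed (use nmu nn_basic nUV in simp_all)
qed

lemma closure_gen:
  fixes h :: "real \<Rightarrow> tensor3"
  assumes c: "continuous_on {0..} h" and m: "\<And>e. 0 < e \<Longrightarrow> h e \<in> RBM32"
  shows "h 0 \<in> closure RBM32"
proof (rule Lim_in_closed_set[of "closure RBM32" h "at_right 0"])
  show "closed (closure RBM32)" by simp
  show "\<forall>\<^sub>F x in at_right 0. h x \<in> closure RBM32"
    using eventually_at_right_less[of "0::real"] by (rule eventually_mono) (use m closure_subset in auto)
  show "at_right (0::real) \<noteq> bot" by simp
  have "(h \<longlongrightarrow> h 0) (at 0 within {0..})" using c by (simp add: continuous_on_def)
  then show "(h \<longlongrightarrow> h 0) (at_right 0)" by (rule tendsto_within_subset) auto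
qed

lemma decA_clos: assumes "decA p" "p \<in> simplex7" shows "p \<in> closure RBM32"
proof -
  obtain U V L j0 k0 where n: "\<forall>i j. 0 \<le> U i j \<and> 0 \<le> V i j \<and> 0 \<le> (L::vec2) i"
    and e: "\<forall>i j k. p i j k = (U::bool\<Rightarrow>vec2) i j * (V::bool\<Rightarrow>vec2) i k + (if j = j0 \<and> k = k0 then L i else 0)"
    using assms(1) unfolding decA_def by blast
  define q where "q = (\<lambda>(x::real) i j k. (U i j + x) * (V i k + x) + (if j = j0 \<and> k = k0 then L i else 0))"
  define S where "S = (\<lambda>x. \<Sum>i\<in>UNIV. \<Sum>j\<in>UNIV. \<Sum>k\<in>UNIV. q x i j k)"
  define h where "h = (\<lambda>x i j k. q x i j k / S x)"
  have q0: "q 0 i j k = p i j k" for i j k using e by (simp add: q_def)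
  have S0: "S 0 = 1" using assms(2) q0 by (simp add: S_def simplex7_def)
  have qm: "q 0 i j k \<le> q x i j k" if "0 \<le> x" for x i j k
  proof -
    have "U i j * V i k \<le> (U i j + x) * (V i k + x)"
      using n that by (intro mult_mono) auto
    then show ?thesis by (simp add: q_def)
  qed
  have S1: "1 \<le> S x" if "0 \<le> x" for x
  proof -
    have "S 0 \<le> S x" unfolding S_def by (intro sum_mono qm that)
    then show ?thesis using S0 by simp
  qed
  have h0: "h 0 = p" by (intro ext) (simp add: h_def q0 S0)
  have qc: "continuous_on {0..} (\<lambda>x. q x i j k)" for i j k
    unfolding q_def by (intro continuous_intros)
  have Sc: "continuous_on {0..} S"
    unfolding S_def q_def by (intro continuous_intros)
  have cont: "continuous_on {0..} h" unfolding h_def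
    by (intro continuous_on_coordinatewise_then_product continuous_on_divide qc Sc)
      (use S1 in force)
  have mem: "h x \<in> RBM32" if x: "0 < x" for x
  proof (rule decA_RBM)
    have Sx: "0 < S x" using S1[of x] x by simp
    have qp: "0 < q x i j k" for i j k
    proof -
      have u: "0 \<le> U i j" "0 \<le> V i k" "0 \<le> L i" using n by auto
      then have "0 < (U i j + x) * (V i k + x)" using x by (intro mult_pos_pos) auto
      then show ?thesis using u by (simp add: q_def add_pos_nonneg)
    qed
    show "strictly_positive (h x)" using qp Sx by (simp add: strictly_positive_def h_def)
    have "(\<Sum>i\<in>UNIV. \<Sum>j\<in>UNIV. \<Sum>k\<in>UNIV. h x i j k) = S x / S x"
      unfolding h_def S_def by (simp only: sum_divide_distrib)
    then show "h x \<in> simplex7" using qp Sx by (simp add: simplex7_def h_def less_imp_le)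
    show "decA (h x)" unfolding decA_def
    proof (intro exI conjI allI)
      fix i j k
      show "h x i j k = (U i j + x) / S x * (V i k + x) + (if j = j0 \<and> k = k0 then L i / S x else 0)"
        using Sx by (auto simp: h_def q_def field_simps)
      fix i j
      show "0 \<le> (U i j + x) / S x" "0 \<le> V i j + x" "0 \<le> L i / S x" using n x Sx by auto
    qed
  qed
  show ?thesis using closure_gen[of h] cont mem h0 by simp
qed


lemma decB_clos: assumes "decB p" "p \<in> simplex7" shows "p \<in> closure RBM32"
proof -
  obtain U V L j0 k0 where n: "\<forall>i j. 0 \<le> U i j \<and> 0 \<le> V i j \<and> 0 \<le> (L::vec2) i"
    and e: "\<forall>i j k. p i j k = (U::bool\<Rightarrow>vec2) j i * (V::bool\<Rightarrow>vec2) j k + (if i = j0 \<and> k = k0 then L j else 0)"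
    using assms(1) unfolding decB_def by blast
  define q where "q = (\<lambda>(x::real) i j k. (U j i + x) * (V j k + x) + (if i = j0 \<and> k = k0 then L j else 0))"
  define S where "S = (\<lambda>x. \<Sum>i\<in>UNIV. \<Sum>j\<in>UNIV. \<Sum>k\<in>UNIV. q x i j k)"
  define h where "h = (\<lambda>x i j k. q x i j k / S x)"
  have q0: "q 0 i j k = p i j k" for i j k using e by (simp add: q_def)
  have S0: "S 0 = 1" using assms(2) q0 by (simp add: S_def simplex7_def)
  have qm: "q 0 i j k \<le> q x i j k" if "0 \<le> x" for x i j k
  proof -
    have "U j i * V j k \<le> (U j i + x) * (V j k + x)"
      using n that by (intro mult_mono) auto
    then show ?thesis by (simp add: q_def)
  qed
  have S1: "1 \<le> S x" if "0 \<le> x" for x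
  proof -
    have "S 0 \<le> S x" unfolding S_def by (intro sum_mono qm that)
    then show ?thesis using S0 by simp
  qed
  have h0: "h 0 = p" by (intro ext) (simp add: h_def q0 S0)
  have qc: "continuous_on {0..} (\<lambda>x. q x i j k)" for i j k
    unfolding q_def by (intro continuous_intros)
  have Sc: "continuous_on {0..} S"
    unfolding S_def q_def by (intro continuous_intros)
  have cont: "continuous_on {0..} h" unfolding h_def
    by (intro continuous_on_coordinatewise_then_product continuous_on_divide qc Sc)
      (use S1 in force)
  have mem: "h x \<in> RBM32" if x: "0 < x" for x
  proof (rule decB_RBM)
    have Sx: "0 < S x" using S1[of x] x by simp
    have qp: "0 < q x i j k" for i j k
    proof -
      have u: "0 \<le> U j i" "0 \<le> V j k" "0 \<le> L j" using n by auto
      then have "0 < (U j i + x) * (V j k + x)" using x by (intro mult_pos_pos) auto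
      then show ?thesis using u by (simp add: q_def add_pos_nonneg)
    qed
    show "strictly_positive (h x)" using qp Sx by (simp add: strictly_positive_def h_def)
    have "(\<Sum>i\<in>UNIV. \<Sum>j\<in>UNIV. \<Sum>k\<in>UNIV. h x i j k) = S x / S x"
      unfolding h_def S_def by (simp only: sum_divide_distrib)
    then show "h x \<in> simplex7" using qp Sx by (simp add: simplex7_def h_def less_imp_le)
    show "decB (h x)" unfolding decB_def
    proof (intro exI conjI allI)
      fix i j k
      show "h x i j k = (U j i + x) / S x * (V j k + x) + (if i = j0 \<and> k = k0 then L j / S x else 0)"
        using Sx by (auto simp: h_def q_def field_simps)
      fix i j
      show "0 \<le> (U i j + x) / S x" "0 \<le> V i j + x" "0 \<le> L i / S x" using n x Sx by auto
    qed
  qed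
  show ?thesis using closure_gen[of h] cont mem h0 by simp
qed


lemma decC_clos: assumes "decC p" "p \<in> simplex7" shows "p \<in> closure RBM32"
proof -
  obtain U V L j0 k0 where n: "\<forall>i j. 0 \<le> U i j \<and> 0 \<le> V i j \<and> 0 \<le> (L::vec2) i"
    and e: "\<forall>i j k. p i j k = (U::bool\<Rightarrow>vec2) k i * (V::bool\<Rightarrow>vec2) k j + (if i = j0 \<and> j = k0 then L k else 0)"
    using assms(1) unfolding decC_def by blast
  define q where "q = (\<lambda>(x::real) i j k. (U k i + x) * (V k j + x) + (if i = j0 \<and> j = k0 then L k else 0))"
  define S where "S = (\<lambda>x. \<Sum>i\<in>UNIV. \<Sum>j\<in>UNIV. \<Sum>k\<in>UNIV. q x i j k)"
  define h where "h = (\<lambda>x i j k. q x i j k / S x)"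
  have q0: "q 0 i j k = p i j k" for i j k using e by (simp add: q_def)
  have S0: "S 0 = 1" using assms(2) q0 by (simp add: S_def simplex7_def)
  have qm: "q 0 i j k \<le> q x i j k" if "0 \<le> x" for x i j k
  proof -
    have "U k i * V k j \<le> (U k i + x) * (V k j + x)"
      using n that by (intro mult_mono) auto
    then show ?thesis by (simp add: q_def)
  qed
  have S1: "1 \<le> S x" if "0 \<le> x" for x
  proof -
    have "S 0 \<le> S x" unfolding S_def by (intro sum_mono qm that)
    then show ?thesis using S0 by simp
  qed
  have h0: "h 0 = p" by (intro ext) (simp add: h_def q0 S0)
  have qc: "continuous_on {0..} (\<lambda>x. q x i j k)" for i j k
    unfolding q_def by (intro continuous_intros)
  have Sc: "continuous_on {0..} S"
    unfolding S_def q_def by (intro continuous_intros)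
  have cont: "continuous_on {0..} h" unfolding h_def
    by (intro continuous_on_coordinatewise_then_product continuous_on_divide qc Sc)
      (use S1 in force)
  have mem: "h x \<in> RBM32" if x: "0 < x" for x
  proof (rule decC_RBM)
    have Sx: "0 < S x" using S1[of x] x by simp
    have qp: "0 < q x i j k" for i j k
    proof -
      have u: "0 \<le> U k i" "0 \<le> V k j" "0 \<le> L k" using n by auto
      then have "0 < (U k i + x) * (V k j + x)" using x by (intro mult_pos_pos) auto
      then show ?thesis using u by (simp add: q_def add_pos_nonneg)
    qed
    show "strictly_positive (h x)" using qp Sx by (simp add: strictly_positive_def h_def)
    have "(\<Sum>i\<in>UNIV. \<Sum>j\<in>UNIV. \<Sum>k\<in>UNIV. h x i j k) = S x / S x"
      unfolding h_def S_def by (simp only: sum_divide_distrib)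
    then show "h x \<in> simplex7" using qp Sx by (simp add: simplex7_def h_def less_imp_le)
    show "decC (h x)" unfolding decC_def
    proof (intro exI conjI allI)
      fix i j k
      show "h x i j k = (U k i + x) / S x * (V k j + x) + (if i = j0 \<and> j = k0 then L k / S x else 0)"
        using Sx by (auto simp: h_def q_def field_simps)
      fix i j
      show "0 \<le> (U i j + x) / S x" "0 \<le> V i j + x" "0 \<le> L i / S x" using n x Sx by auto
    qed
  qed
  show ?thesis using closure_gen[of h] cont mem h0 by simp
qed



definition T3 :: "(nat \<Rightarrow> vec2) \<Rightarrow> (nat \<Rightarrow> vec2) \<Rightarrow> (nat \<Rightarrow> vec2) \<Rightarrow> tensor3" where
  "T3 a b c = (\<lambda>i j k. a 0 i * b 0 j * c 0 k + a 1 i * b 1 j * c 1 k + a 2 i * b 2 j * c 2 k)"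
definition mid :: "(nat \<Rightarrow> vec2) \<Rightarrow> nat \<Rightarrow> nat \<Rightarrow> nat \<Rightarrow> bool" where
  "mid u s t r \<longleftrightarrow> (\<exists>l m. 0 \<le> l \<and> 0 \<le> m \<and> (\<forall>i. u r i = l * u s i + m * u t i))"
definition nn3 :: "(nat \<Rightarrow> vec2) \<Rightarrow> bool" where
  "nn3 u \<longleftrightarrow> (\<forall>r<3. \<forall>i. 0 \<le> u r i)"

lemma mid_sym: "mid u s t r \<longleftrightarrow> mid u t s r"
  unfolding mid_def by (metis add.commute)

lemma cross_anti: "cross u v = - cross v u"
  by (simp add: cross_def)

lemma cramer: "cross x y * z i = cross z y * x i + cross x z * y i"
  by (cases i) (simp_all add: cross_def algebra_simps)

lemma between:
  fixes lo mm hi :: vec2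
  assumes n: "\<And>i. 0 \<le> lo i" "\<And>i. 0 \<le> mm i" "\<And>i. 0 \<le> hi i"
    and nz: "\<exists>i. 0 < lo i" "\<exists>i. 0 < mm i" "\<exists>i. 0 < hi i"
    and c1: "0 \<le> cross lo mm" and c2: "0 \<le> cross mm hi"
  shows "\<exists>l m. 0 \<le> l \<and> 0 \<le> m \<and> (\<forall>i. mm i = l * lo i + m * hi i)"
proof (cases "0 < cross lo hi")
  case True
  show ?thesis
  proof (intro exI conjI allI)
    show "0 \<le> cross mm hi / cross lo hi" "0 \<le> cross lo mm / cross lo hi"
      using True c1 c2 by auto
    fix i
    have "cross lo hi * mm i = cross mm hi * lo i + cross lo mm * hi i" by (rule cramer)
    then show "mm i = cross mm hi / cross lo hi * lo i + cross lo mm / cross lo hi * hi i"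
      using True by (simp add: field_simps)
  qed
next
  case False
  obtain i0 where i0: "0 < mm i0" using nz(2) by blast
  have "0 \<le> cross mm hi * lo i0 + cross lo mm * hi i0"
    using n c1 c2 by (intro add_nonneg_nonneg mult_nonneg_nonneg) auto
  then have "0 \<le> cross lo hi * mm i0" using cramer[of lo hi mm i0] by simp
  then have "0 \<le> cross lo hi" using i0 by (simp add: zero_le_mult_iff)
  then have z: "cross lo hi = 0" using False by simp
  obtain i1 where i1: "0 < hi i1" using nz(3) by blast
  have "cross mm hi * lo i1 + cross lo mm * hi i1 = 0" using cramer[of lo hi mm i1] z by simp
  moreover have "0 \<le> cross mm hi * lo i1" "0 \<le> cross lo mm * hi i1"
    using n c1 c2 by auto
  ultimately have "cross lo mm * hi i1 = 0" by linarith
  then have z2: "cross lo mm = 0" using i1 by simp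
  obtain i2 where i2: "0 < lo i2" using nz(1) by blast
  show ?thesis
  proof (intro exI conjI allI)
    show "0 \<le> mm i2 / lo i2" "0 \<le> (0::real)" using n i2 by auto
    fix i
    have e: "lo False * mm True = lo True * mm False" using z2 by (simp add: cross_def)
    show "mm i = mm i2 / lo i2 * lo i + 0 * hi i"
      using i2 e by (cases i; cases i2) (auto simp: field_simps)
  qed
qed

lemma mid_vec:
  fixes x y z :: vec2
  assumes n: "\<And>i. 0 \<le> x i" "\<And>i. 0 \<le> y i" "\<And>i. 0 \<le> z i"
  shows "(\<exists>l m. 0 \<le> l \<and> 0 \<le> m \<and> (\<forall>i. z i = l * x i + m * y i)) \<or>
         (\<exists>l m. 0 \<le> l \<and> 0 \<le> m \<and> (\<forall>i. y i = l * x i + m * z i)) \<or>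
         (\<exists>l m. 0 \<le> l \<and> 0 \<le> m \<and> (\<forall>i. x i = l * y i + m * z i))"
proof -
  have nzI: "(\<forall>i. v i = 0) \<or> (\<exists>i. 0 < v i)" if "\<And>i. 0 \<le> (v::vec2) i" for v
    using that by (metis less_eq_real_def)
  consider "\<forall>i. x i = 0" | "\<forall>i. y i = 0" | "\<forall>i. z i = 0"
    | "\<exists>i. 0 < x i" "\<exists>i. 0 < y i" "\<exists>i. 0 < z i"
    using nzI[of x, OF n(1)] nzI[of y, OF n(2)] nzI[of z, OF n(3)] by blast
  then show ?thesis
  proof cases
    case 1 show ?thesis by (rule disjI2, rule disjI2, rule exI[of _ 0], rule exI[of _ 0]) (simp add: 1)
  next
    case 2 show ?thesis by (rule disjI2, rule disjI1, rule exI[of _ 0], rule exI[of _ 0]) (simp add: 2)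
  next
    case 3 show ?thesis by (rule disjI1, rule exI[of _ 0], rule exI[of _ 0]) (simp add: 3)
  next
    case 4
    note nx = 4(1) and ny = 4(2) and nz = 4(3)
    have anti: "cross u v \<le> 0 \<Longrightarrow> 0 \<le> cross v u" for u v using cross_anti[of u v] by linarith
    have anti2: "\<not> 0 \<le> cross u v \<Longrightarrow> 0 \<le> cross v u" for u v using cross_anti[of u v] by linarith
    have sw: "(\<exists>l m. 0 \<le> l \<and> 0 \<le> m \<and> (\<forall>i. (w::vec2) i = l * u i + m * v i)) \<Longrightarrow>
              (\<exists>l m. 0 \<le> l \<and> 0 \<le> m \<and> (\<forall>i. w i = l * v i + m * u i))" for u v w
      by (metis add.commute)
    show ?thesis
    proof (cases "0 \<le> cross x y")
      case xy: True
      show ?thesis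
      proof (cases "0 \<le> cross y z")
        case yz: True
        show ?thesis using between[OF n(1) n(2) n(3) nx ny nz xy yz] by blast
      next
        case yz: False
        show ?thesis
        proof (cases "0 \<le> cross x z")
          case xz: True
          show ?thesis using between[OF n(1) n(3) n(2) nx nz ny xz anti2[OF yz]] by blast
        next
          case xz: False
          show ?thesis using sw[OF between[OF n(3) n(1) n(2) nz nx ny anti2[OF xz] xy]] by blast
        qed
      qed
    next
      case xy: False
      show ?thesis
      proof (cases "0 \<le> cross y z")
        case yz: True
        show ?thesis
        proof (cases "0 \<le> cross x z")
          case xz: True
          show ?thesis using between[OF n(2) n(1) n(3) ny nx nz anti2[OF xy] xz] by blast
        next
          case xz: False
          show ?thesis using sw[OF between[OF n(2) n(3) n(1) ny nz nx yz anti2[OF xz]]] by blast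
        qed
      next
        case yz: False
        show ?thesis using sw[OF between[OF n(3) n(2) n(1) nz ny nx anti2[OF yz] anti2[OF xy]]] by blast
      qed
    qed
  qed
qed

lemma mid3: assumes "nn3 u" shows "mid u 0 1 2 \<or> mid u 0 2 1 \<or> mid u 1 2 0"
  using mid_vec[of "u 0" "u 1" "u 2"] assms unfolding nn3_def mid_def by auto

lemma ss:
  assumes e: "\<And>x. d x = (kap::real) * q x" and q: "(\<forall>x. 0 \<le> q x) \<or> (\<forall>x. q x \<le> 0)"
  shows "samesign d"
proof (cases "0 \<le> kap")
  case True
  from q show ?thesis
  proof
    assume "\<forall>x. 0 \<le> q x"
    then have "0 \<le> d x" for x using True e by simp
    then show ?thesis by (simp add: samesign_def)
  next
    assume "\<forall>x. q x \<le> 0"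
    then have "d x \<le> 0" for x using True e by (simp add: mult_nonneg_nonpos)
    then show ?thesis by (simp add: samesign_def)
  qed
next
  case False
  from q show ?thesis
  proof
    assume "\<forall>x. 0 \<le> q x"
    then have "d x \<le> 0" for x using False e by (simp add: mult_nonpos_nonneg)
    then show ?thesis by (simp add: samesign_def)
  next
    assume "\<forall>x. q x \<le> 0"
    then have "0 \<le> d x" for x using False e by (simp add: mult_nonpos_nonpos)
    then show ?thesis by (simp add: samesign_def)
  qed
qed

lemma L1base:
  assumes "mid a 0 1 2" "mid b 0 1 2" "nn3 c"
  shows "samesign (dC (T3 a b c))"
proof -
  obtain l m where l: "0 \<le> l" "0 \<le> m" "\<And>i. a 2 i = l * a 0 i + m * a 1 i"
    using assms(1) unfolding mid_def by blast
  obtain l1 m1 where l1: "0 \<le> l1" "0 \<le> m1" "\<And>i. b 2 i = l1 * b 0 i + m1 * b 1 i"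
    using assms(2) unfolding mid_def by blast
  have key: "dC (T3 a b c) k = (cross (a 0) (a 1) * cross (b 0) (b 1)) *
      (c 0 k * c 1 k + c 0 k * c 2 k * m * m1 + c 1 k * c 2 k * l * l1)" for k
    by (simp only: dC_def T3_def cross_def l(3) l1(3)) algebra
  have "0 \<le> c r k" if "r < 3" for r k using assms(3) that by (simp add: nn3_def)
  then have "\<forall>k. 0 \<le> c 0 k * c 1 k + c 0 k * c 2 k * m * m1 + c 1 k * c 2 k * l * l1"
    using l l1 by (intro allI add_nonneg_nonneg mult_nonneg_nonneg) auto
  then show ?thesis by (intro ss[OF key]) simp
qed

lemma L2base:
  assumes "mid a 0 1 2" "mid b 0 2 1" "mid c 1 2 0" "nn3 a" "nn3 b"
  shows "samesign (dA (T3 a b c)) \<or> samesign (dB (T3 a b c))"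
proof -
  obtain l m where l: "0 \<le> l" "0 \<le> m" "\<And>i. a 2 i = l * a 0 i + m * a 1 i"
    using assms(1) unfolding mid_def by blast
  obtain l1 m1 where l1: "0 \<le> l1" "0 \<le> m1" "\<And>i. b 1 i = l1 * b 0 i + m1 * b 2 i"
    using assms(2) unfolding mid_def by blast
  obtain l2 m2 where l2: "0 \<le> l2" "0 \<le> m2" "\<And>i. c 0 i = l2 * c 1 i + m2 * c 2 i"
    using assms(3) unfolding mid_def by blast
  have keyA: "dA (T3 a b c) i = (cross (b 0) (b 2) * cross (c 1) (c 2)) *
      (l * l2 * (a 0 i * a 0 i) + m * l1 * (a 1 i * a 1 i) + (l2 * m + l1 * l - m1 * m2) * (a 0 i * a 1 i))" for i
    by (simp only: dA_def T3_def cross_def l(3) l1(3) l2(3)) algebra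
  have keyB: "dB (T3 a b c) j = (cross (a 0) (a 1) * cross (c 1) (c 2)) *
      - (l1 * m2 * (b 0 j * b 0 j) + m1 * l * (b 2 j * b 2 j) + (l1 * l + m1 * m2 - l2 * m) * (b 0 j * b 2 j))" for j
    by (simp only: dB_def T3_def cross_def l(3) l1(3) l2(3)) algebra
  have na: "0 \<le> a r i" if "r < 3" for r i using assms(4) that by (simp add: nn3_def)
  have nb: "0 \<le> b r i" if "r < 3" for r i using assms(5) that by (simp add: nn3_def)
  show ?thesis
  proof (cases "0 \<le> l2 * m + l1 * l - m1 * m2")
    case True
    have "\<forall>i. 0 \<le> l * l2 * (a 0 i * a 0 i) + m * l1 * (a 1 i * a 1 i) + (l2 * m + l1 * l - m1 * m2) * (a 0 i * a 1 i)"
      using l l1 l2 True na[of 0] na[of 1] by (intro allI add_nonneg_nonneg mult_nonneg_nonneg) auto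
    then have "samesign (dA (T3 a b c))" by (intro ss[OF keyA]) simp
    then show ?thesis ..
  next
    case False
    have "0 \<le> l1 * l" using l l1 by simp
    then have K: "0 \<le> l1 * l + m1 * m2 - l2 * m" using False by linarith
    have "\<forall>j. 0 \<le> l1 * m2 * (b 0 j * b 0 j) + m1 * l * (b 2 j * b 2 j) + (l1 * l + m1 * m2 - l2 * m) * (b 0 j * b 2 j)"
      using l l1 l2 K nb[of 0] nb[of 2] by (intro allI add_nonneg_nonneg mult_nonneg_nonneg) auto
    then have "\<forall>j. - (l1 * m2 * (b 0 j * b 0 j) + m1 * l * (b 2 j * b 2 j) + (l1 * l + m1 * m2 - l2 * m) * (b 0 j * b 2 j)) \<le> 0"
      by (simp only: neg_le_0_iff_le) blast
    then have "samesign (dB (T3 a b c))" by (intro ss[OF keyB]) simp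
    then show ?thesis ..
  qed
qed

definition pm :: "nat \<Rightarrow> nat \<Rightarrow> nat \<Rightarrow> nat \<Rightarrow> nat" where
  "pm x y z = (\<lambda>r. if r = 0 then x else if r = 1 then y else z)"
definition P6 :: "(nat \<times> nat \<times> nat) set" where
  "P6 = {(0,1,2),(0,2,1),(1,0,2),(1,2,0),(2,0,1),(2,1,0)}"

lemma mid_comp: "mid (u \<circ> f) s t r = mid u (f s) (f t) (f r)"
  by (simp add: mid_def)

lemma T3_pm: assumes "(x,y,z) \<in> P6"
  shows "T3 (a \<circ> pm x y z) (b \<circ> pm x y z) (c \<circ> pm x y z) = T3 a b c"
  using assms by (auto simp: T3_def pm_def P6_def fun_eq_iff algebra_simps)

lemma nn3_pm: assumes "(x,y,z) \<in> P6" "nn3 u" shows "nn3 (u \<circ> pm x y z)"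
proof -
  have "x < 3" "y < 3" "z < 3" using assms(1) by (auto simp: P6_def)
  then show ?thesis using assms(2) unfolding nn3_def pm_def by auto
qed

lemma Cond_sw23: "Cond (\<lambda>i j k. p i k j) = Cond p"
proof -
  have "dA (\<lambda>i j k. p i k j) = dA p" "dB (\<lambda>i j k. p i k j) = dC p" "dC (\<lambda>i j k. p i k j) = dB p"
    by (auto simp: fun_eq_iff dA_def dB_def dC_def mult.commute)
  then show ?thesis unfolding Cond_def by auto
qed

lemma Cond_cyc: "Cond (\<lambda>i j k. p k i j) = Cond p"
proof -
  have "dA (\<lambda>i j k. p k i j) = dB p" "dB (\<lambda>i j k. p k i j) = dC p" "dC (\<lambda>i j k. p k i j) = dA p"
    by (auto simp: fun_eq_iff dA_def dB_def dC_def mult.commute)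
  then show ?thesis unfolding Cond_def by auto
qed

lemma L1ab: assumes "(s,t,r) \<in> P6" "mid a s t r" "mid b s t r" "nn3 c"
  shows "Cond (T3 a b c)"
proof -
  have "samesign (dC (T3 (a \<circ> pm s t r) (b \<circ> pm s t r) (c \<circ> pm s t r)))"
    by (rule L1base) (use assms nn3_pm in \<open>simp_all add: mid_comp pm_def\<close>)
  then show ?thesis using T3_pm[OF assms(1)] by (simp add: Cond_def)
qed

lemma L1ac: assumes "(s,t,r) \<in> P6" "mid a s t r" "mid c s t r" "nn3 b"
  shows "Cond (T3 a b c)"
proof -
  have "Cond (T3 a c b)" by (rule L1ab[OF assms])
  moreover have "T3 a c b = (\<lambda>i j k. T3 a b c i k j)" by (simp add: T3_def fun_eq_iff mult_ac)
  ultimately show ?thesis using Cond_sw23 by metis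
qed

lemma L1bc: assumes "(s,t,r) \<in> P6" "mid b s t r" "mid c s t r" "nn3 a"
  shows "Cond (T3 a b c)"
proof -
  have "Cond (T3 b c a)" by (rule L1ab[OF assms])
  moreover have "T3 b c a = (\<lambda>i j k. T3 a b c k i j)" by (simp add: T3_def fun_eq_iff mult_ac)
  ultimately show ?thesis using Cond_cyc by metis
qed

lemma L2g: assumes "(x,y,z) \<in> P6" "mid a x y z" "mid b x z y" "mid c y z x" "nn3 a" "nn3 b"
  shows "Cond (T3 a b c)"
proof -
  have "samesign (dA (T3 (a \<circ> pm x y z) (b \<circ> pm x y z) (c \<circ> pm x y z))) \<or>
        samesign (dB (T3 (a \<circ> pm x y z) (b \<circ> pm x y z) (c \<circ> pm x y z)))"
    by (rule L2base) (use assms nn3_pm in \<open>simp_all add: mid_comp pm_def\<close>)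
  then show ?thesis using T3_pm[OF assms(1)] by (auto simp: Cond_def)
qed

lemma M33_Cond: assumes "p \<in> M33" shows "Cond p"
proof -
  obtain a b c :: "nat \<Rightarrow> vec2" where n: "\<forall>r<3. nonneg2 (a r) \<and> nonneg2 (b r) \<and> nonneg2 (c r)"
    and p: "p = (\<lambda>i j k. \<Sum>r<3. outer3 (a r) (b r) (c r) i j k)"
    using assms unfolding M33_def mem_Collect_eq by (elim conjE exE) (rule that; assumption)
  have pT: "p = T3 a b c" unfolding p T3_def by (simp add: numeral_3_eq_3 eval_nat_numeral outer3_def)
  have nna: "nn3 a" and nnb: "nn3 b" and nnc: "nn3 c" using n by (auto simp: nn3_def nonneg2_def)
  have c1: "Cond (T3 a b c)" if "mid a 0 1 2" "mid b 0 1 2" "mid c 0 1 2"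
    using L1ab[of 0 1 2 a b c] that nna nnb nnc by (simp add: P6_def)
  have c2: "Cond (T3 a b c)" if "mid a 0 1 2" "mid b 0 1 2" "mid c 0 2 1"
    using L1ab[of 0 1 2 a b c] that nna nnb nnc by (simp add: P6_def)
  have c3: "Cond (T3 a b c)" if "mid a 0 1 2" "mid b 0 1 2" "mid c 1 2 0"
    using L1ab[of 0 1 2 a b c] that nna nnb nnc by (simp add: P6_def)
  have c4: "Cond (T3 a b c)" if "mid a 0 1 2" "mid b 0 2 1" "mid c 0 1 2"
    using L1ac[of 0 1 2 a c b] that nna nnb nnc by (simp add: P6_def)
  have c5: "Cond (T3 a b c)" if "mid a 0 1 2" "mid b 0 2 1" "mid c 0 2 1"
    using L1bc[of 0 2 1 b c a] that nna nnb nnc by (simp add: P6_def)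
  have c6: "Cond (T3 a b c)" if "mid a 0 1 2" "mid b 0 2 1" "mid c 1 2 0"
    using L2g[of 0 1 2 a b c] that nna nnb nnc mid_sym by (simp add: P6_def)
  have c7: "Cond (T3 a b c)" if "mid a 0 1 2" "mid b 1 2 0" "mid c 0 1 2"
    using L1ac[of 0 1 2 a c b] that nna nnb nnc by (simp add: P6_def)
  have c8: "Cond (T3 a b c)" if "mid a 0 1 2" "mid b 1 2 0" "mid c 0 2 1"
    using L2g[of 1 0 2 a b c] that nna nnb nnc mid_sym by (simp add: P6_def)
  have c9: "Cond (T3 a b c)" if "mid a 0 1 2" "mid b 1 2 0" "mid c 1 2 0"
    using L1bc[of 1 2 0 b c a] that nna nnb nnc by (simp add: P6_def)
  have c10: "Cond (T3 a b c)" if "mid a 0 2 1" "mid b 0 1 2" "mid c 0 1 2"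
    using L1bc[of 0 1 2 b c a] that nna nnb nnc by (simp add: P6_def)
  have c11: "Cond (T3 a b c)" if "mid a 0 2 1" "mid b 0 1 2" "mid c 0 2 1"
    using L1ac[of 0 2 1 a c b] that nna nnb nnc by (simp add: P6_def)
  have c12: "Cond (T3 a b c)" if "mid a 0 2 1" "mid b 0 1 2" "mid c 1 2 0"
    using L2g[of 0 2 1 a b c] that nna nnb nnc mid_sym by (simp add: P6_def)
  have c13: "Cond (T3 a b c)" if "mid a 0 2 1" "mid b 0 2 1" "mid c 0 1 2"
    using L1ab[of 0 2 1 a b c] that nna nnb nnc by (simp add: P6_def)
  have c14: "Cond (T3 a b c)" if "mid a 0 2 1" "mid b 0 2 1" "mid c 0 2 1"
    using L1ab[of 0 2 1 a b c] that nna nnb nnc by (simp add: P6_def)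
  have c15: "Cond (T3 a b c)" if "mid a 0 2 1" "mid b 0 2 1" "mid c 1 2 0"
    using L1ab[of 0 2 1 a b c] that nna nnb nnc by (simp add: P6_def)
  have c16: "Cond (T3 a b c)" if "mid a 0 2 1" "mid b 1 2 0" "mid c 0 1 2"
    using L2g[of 2 0 1 a b c] that nna nnb nnc mid_sym by (simp add: P6_def)
  have c17: "Cond (T3 a b c)" if "mid a 0 2 1" "mid b 1 2 0" "mid c 0 2 1"
    using L1ac[of 0 2 1 a c b] that nna nnb nnc by (simp add: P6_def)
  have c18: "Cond (T3 a b c)" if "mid a 0 2 1" "mid b 1 2 0" "mid c 1 2 0"
    using L1bc[of 1 2 0 b c a] that nna nnb nnc by (simp add: P6_def)
  have c19: "Cond (T3 a b c)" if "mid a 1 2 0" "mid b 0 1 2" "mid c 0 1 2"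
    using L1bc[of 0 1 2 b c a] that nna nnb nnc by (simp add: P6_def)
  have c20: "Cond (T3 a b c)" if "mid a 1 2 0" "mid b 0 1 2" "mid c 0 2 1"
    using L2g[of 1 2 0 a b c] that nna nnb nnc mid_sym by (simp add: P6_def)
  have c21: "Cond (T3 a b c)" if "mid a 1 2 0" "mid b 0 1 2" "mid c 1 2 0"
    using L1ac[of 1 2 0 a c b] that nna nnb nnc by (simp add: P6_def)
  have c22: "Cond (T3 a b c)" if "mid a 1 2 0" "mid b 0 2 1" "mid c 0 1 2"
    using L2g[of 2 1 0 a b c] that nna nnb nnc mid_sym by (simp add: P6_def)
  have c23: "Cond (T3 a b c)" if "mid a 1 2 0" "mid b 0 2 1" "mid c 0 2 1"
    using L1bc[of 0 2 1 b c a] that nna nnb nnc by (simp add: P6_def)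
  have c24: "Cond (T3 a b c)" if "mid a 1 2 0" "mid b 0 2 1" "mid c 1 2 0"
    using L1ac[of 1 2 0 a c b] that nna nnb nnc by (simp add: P6_def)
  have c25: "Cond (T3 a b c)" if "mid a 1 2 0" "mid b 1 2 0" "mid c 0 1 2"
    using L1ab[of 1 2 0 a b c] that nna nnb nnc by (simp add: P6_def)
  have c26: "Cond (T3 a b c)" if "mid a 1 2 0" "mid b 1 2 0" "mid c 0 2 1"
    using L1ab[of 1 2 0 a b c] that nna nnb nnc by (simp add: P6_def)
  have c27: "Cond (T3 a b c)" if "mid a 1 2 0" "mid b 1 2 0" "mid c 1 2 0"
    using L1ab[of 1 2 0 a b c] that nna nnb nnc by (simp add: P6_def)
  have "Cond (T3 a b c)"
    by (insert mid3[OF nna] mid3[OF nnb] mid3[OF nnc], (elim disjE; (rule c1 c2 c3 c4 c5 c6 c7 c8 c9 c10 c11 c12 c13 c14 c15 c16 c17 c18 c19 c20 c21 c22 c23 c24 c25 c26 c27; assumption)))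
  then show ?thesis using pT by simp
qed



lemma cont_entry: "continuous_on S (\<lambda>p::tensor3. p i j k)"
proof -
  have c1: "continuous_on UNIV (\<lambda>p::tensor3. p i)" by (rule continuous_on_product_coordinates)
  have c2: "continuous_on UNIV (\<lambda>p::tensor3. p i j)"
    using continuous_on_product_then_coordinatewise[OF c1, of j] by simp
  have c3: "continuous_on UNIV (\<lambda>p::tensor3. p i j k)"
    using continuous_on_product_then_coordinatewise[OF c2, of k] by simp
  then show ?thesis by (rule continuous_on_subset) simp
qed
lemma closed_Cond: "closed {p. Cond p}"
  unfolding Cond_def samesign_def dA_def dB_def dC_def
  by (intro closed_Collect_disj closed_Collect_conj closed_Collect_le continuous_on_diff continuous_on_mult cont_entry continuous_on_const)

lemma simplex_nn: "p \<in> simplex7 \<Longrightarrow> 0 \<le> p i j k"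
  by (simp add: simplex7_def)

lemma dec_all: "p \<in> simplex7 \<Longrightarrow> Cond p \<Longrightarrow> decA p \<or> decB p \<or> decC p"
  using Cond_dec simplex_nn by blast

lemma M33_simplex: "p \<in> M33 \<Longrightarrow> p \<in> simplex7" by (simp add: M33_def)
lemma RBM_simplex: "p \<in> RBM32 \<Longrightarrow> p \<in> simplex7" by (simp add: RBM32_def)

theorem theorem2:
  shows "M33 = simplex7 \<inter> closure RBM32 \<and>
         {p \<in> M33. strictly_positive p} = {p \<in> RBM32. strictly_positive p}"
proof (intro conjI)
  have cl: "closure RBM32 \<subseteq> {p. Cond p}"
    using RBM_Cond closed_Cond by (intro closure_minimal) auto
  show "M33 = simplex7 \<inter> closure RBM32"
  proof (intro equalityI subsetI)
    fix p assume p: "p \<in> M33"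
    have s: "p \<in> simplex7" using M33_simplex[OF p] .
    have "decA p \<or> decB p \<or> decC p" using dec_all[OF s M33_Cond[OF p]] .
    then have "p \<in> closure RBM32" using decA_clos[OF _ s] decB_clos[OF _ s] decC_clos[OF _ s] by blast
    then show "p \<in> simplex7 \<inter> closure RBM32" using s by (rule IntI[rotated])
  next
    fix p assume p: "p \<in> simplex7 \<inter> closure RBM32"
    have s: "p \<in> simplex7" using p by (rule IntD1)
    have "Cond p" using cl IntD2[OF p] by blast
    then have "decA p \<or> decB p \<or> decC p" using dec_all[OF s] by blast
    then show "p \<in> M33" using decA_M33[OF _ s] decB_M33[OF _ s] decC_M33[OF _ s] by blast
  qed
  show "{p \<in> M33. strictly_positive p} = {p \<in> RBM32. strictly_positive p}"
  proof (intro equalityI subsetI)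
    fix p assume p: "p \<in> {p \<in> M33. strictly_positive p}"
    have pm: "p \<in> M33" and pp: "strictly_positive p" using p by simp_all
    have s: "p \<in> simplex7" using M33_simplex[OF pm] .
    have "decA p \<or> decB p \<or> decC p" using dec_all[OF s M33_Cond[OF pm]] .
    then have "p \<in> RBM32" using decA_RBM[OF _ s pp] decB_RBM[OF _ s pp] decC_RBM[OF _ s pp] by blast
    then show "p \<in> {p \<in> RBM32. strictly_positive p}" using pp by simp
  next
    fix p assume p: "p \<in> {p \<in> RBM32. strictly_positive p}"
    have pm: "p \<in> RBM32" and pp: "strictly_positive p" using p by simp_all
    have s: "p \<in> simplex7" using RBM_simplex[OF pm] .
    have "decA p \<or> decB p \<or> decC p" using dec_all[OF s RBM_Cond[OF pm]] .
    then have "p \<in> M33" using decA_M33[OF _ s] decB_M33[OF _ s] decC_M33[OF _ s] by blast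
    then show "p \<in> {p \<in> M33. strictly_positive p}" using pp by simp
  qed
qed

end
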